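(* Let $p,q$ be distinct prime numbers and let $G=\langle a,s,t \mid sas^{-1}=a^p,\ tat^{-1}=a^q\rangle$. Then $C_G(t)=\langle t\rangle$, $C_G(s)=\langle s\rangle$, and for every integer $i\geq 0$ we have $C_G(st^i)=\langle st^i\rangle$.
   Context: For a group $G$ and $g\in G$, $C_G(g)=\{h\in G\mid gh=hg\}$ is the centraliser of $g$. *)

theory Defs
  imports "HOL-Algebra.Algebra" "HOL-Computational_Algebra.Primes"
begin

definition centraliser :: "('a, 'b) monoid_scheme \<Rightarrow> 'a \<Rightarrow> 'a set" where
  "centraliser G g = {h \<in> carrier G. g \<otimes>\<^bsub>G\<^esub> h = h \<otimes>\<^bsub>G\<^esub> g}"

datatype gen = GA | GS | GT

text \<open>A letter is a generator with a sign: True = the generator, False = its inverse.\<close>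
type_synonym letter = "gen \<times> bool"

definition inv_letter :: "letter \<Rightarrow> letter" where
  "inv_letter x = (fst x, \<not> snd x)"

definition relators :: "nat \<Rightarrow> nat \<Rightarrow> letter list set" where
  "relators p q =
     {[(GS, True), (GA, True), (GS, False)] @ replicate p (GA, False),
      [(GT, True), (GA, True), (GT, False)] @ replicate q (GA, False)}"

inductive_set del_step :: "nat \<Rightarrow> nat \<Rightarrow> (letter list \<times> letter list) set"
  for p q :: nat where
  cancel: "(u @ [x, inv_letter x] @ v, u @ v) \<in> del_step p q"
| relator: "r \<in> relators p q \<Longrightarrow> (u @ r @ v, u @ v) \<in> del_step p q"

definition word_eq :: "nat \<Rightarrow> nat \<Rightarrow> (letter list \<times> letter list) set" where
  "word_eq p q = (del_step p q \<union> (del_step p q)\<inverse>)\<^sup>*"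

definition BS_group :: "nat \<Rightarrow> nat \<Rightarrow> letter list set monoid" where
  "BS_group p q =
     \<lparr>carrier = UNIV // word_eq p q,
      monoid.mult = (\<lambda>U V. \<Union>x\<in>U. \<Union>y\<in>V. word_eq p q `` {x @ y}),
      one = word_eq p q `` {[]}\<rparr>"

definition gen_elem :: "nat \<Rightarrow> nat \<Rightarrow> gen \<Rightarrow> letter list set" where
  "gen_elem p q x = word_eq p q `` {[(x, True)]}"

end

theory Submission
  imports Defs
begin

lemma del_step_ctx: "(x,y) \<in> del_step p q \<Longrightarrow> (w@x@z, w@y@z) \<in> del_step p q"
proof (induction rule: del_step.induct)
  case (cancel u x v)
  then show ?case using del_step.cancel[of "w@u" x "v@z" p q] by simp
next
  case (relator r u v)
  then show ?case using del_step.relator[of r p q "w@u" "v@z"] by simp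
qed

lemma weq_ctx: "(x,y) \<in> word_eq p q \<Longrightarrow> (w@x@z, w@y@z) \<in> word_eq p q"
  unfolding word_eq_def
proof (induction rule: rtrancl_induct)
  case base then show ?case by simp
next
  case (step y z')
  then have "(w@y@z, w@z'@z) \<in> del_step p q \<union> (del_step p q)\<inverse>"
    using del_step_ctx by blast
  then show ?case using step.IH by (meson rtrancl.rtrancl_into_rtrancl)
qed

lemma weq_refl[simp]: "(x,x) \<in> word_eq p q" unfolding word_eq_def by simp
lemma weq_sym: "(x,y) \<in> word_eq p q \<Longrightarrow> (y,x) \<in> word_eq p q"
  unfolding word_eq_def by (metis converse_Un converse_converse rtrancl_converseI sup_commute)
lemma weq_trans: "(x,y) \<in> word_eq p q \<Longrightarrow> (y,z) \<in> word_eq p q \<Longrightarrow> (x,z) \<in> word_eq p q"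
  unfolding word_eq_def by (meson rtrancl_trans)
lemma weq_app: "(x,y) \<in> word_eq p q \<Longrightarrow> (x',y') \<in> word_eq p q \<Longrightarrow> (x@x', y@y') \<in> word_eq p q"
  using weq_ctx[of x y p q "[]" x'] weq_ctx[of x' y' p q y "[]"] by (simp add: weq_trans)
lemma weq_cancel: "([x, inv_letter x], []) \<in> word_eq p q"
  unfolding word_eq_def using del_step.cancel[of "[]" x "[]" p q] by auto
lemma weq_rel: "r \<in> relators p q \<Longrightarrow> (r, []) \<in> word_eq p q"
  unfolding word_eq_def using del_step.relator[of r p q "[]" "[]"] by auto
lemma equiv_weq: "equiv UNIV (word_eq p q)"
  by (rule equivI) (auto simp: refl_on_def sym_def trans_def intro: weq_sym weq_trans)

type_synonym nf = "int \<times> (letter \<times> nat) list"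

locale bsl =
  fixes p q :: nat
  assumes p1: "1 < p" and q1: "1 < q"
begin

definition bse :: "gen \<Rightarrow> int" where "bse g = int (if g = GS then p else q)"

lemma bse_gt1: "1 < bse g" using p1 q1 by (simp add: bse_def)

definition sig :: "letter \<Rightarrow> nf \<Rightarrow> nf" where
  "sig x n = (if fst x = GA then (if snd x then (fst n + 1, snd n) else (fst n - 1, snd n))
     else if snd x then
       (if snd n \<noteq> [] \<and> fst (hd (snd n)) = (fst x, False)
        then (bse (fst x) * fst n + int (snd (hd (snd n))), tl (snd n))
        else (bse (fst x) * fst n, ((fst x, True), 0) # snd n))
     else
       (if fst n mod bse (fst x) = 0 \<and> snd n \<noteq> [] \<and> fst (hd (snd n)) = (fst x, True)
        then (fst n div bse (fst x), tl (snd n))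
        else (fst n div bse (fst x), ((fst x, False), nat (fst n mod bse (fst x))) # snd n)))"

fun act :: "letter list \<Rightarrow> nf \<Rightarrow> nf" where
  "act [] n = n"
| "act (x # w) n = sig x (act w n)"

lemma act_append: "act (u @ v) n = act u (act v n)"
  by (induction u) auto

definition okl :: "letter \<times> nat \<Rightarrow> bool" where
  "okl y = (fst (fst y) \<noteq> GA \<and> (snd (fst y) \<longrightarrow> snd y = 0) \<and> (\<not> snd (fst y) \<longrightarrow> int (snd y) < bse (fst (fst y))))"

definition adj :: "letter \<times> nat \<Rightarrow> letter \<times> nat \<Rightarrow> bool" where
  "adj x y = (snd x = 0 \<longrightarrow> fst y \<noteq> inv_letter (fst x))"

definition valid :: "nf \<Rightarrow> bool" where
  "valid n = ((\<forall>y\<in>set (snd n). okl y) \<and> successively adj (snd n))"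

lemma valid_Nil[simp]: "valid (k, [])" by (simp add: valid_def)

lemma valid_cons: "valid (k, y # L) \<longleftrightarrow> okl y \<and> (L \<noteq> [] \<longrightarrow> adj y (hd L)) \<and> valid (k', L)"
  by (cases L) (auto simp: valid_def)

lemma valid_k: "valid (k, L) \<longleftrightarrow> valid (k', L)" by (simp add: valid_def)

lemma sig_valid: "valid n \<Longrightarrow> valid (sig x n)"
proof -
  assume v: "valid n"
  obtain k L where n: "n = (k, L)" by fastforce
  obtain g b where x: "x = (g, b)" by fastforce
  show ?thesis
  proof (cases "g = GA")
    case True then show ?thesis using v by (auto simp: sig_def n x valid_def successively_Cons)
  next
    case False
    note gA = False
    have pos: "0 < bse g" using bse_gt1[of g] by simp
    show ?thesis
    proof (cases b)
      case True
      show ?thesis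
      proof (cases "L \<noteq> [] \<and> fst (hd L) = (g, False)")
        case True
        then show ?thesis using v \<open>b\<close> by (cases L) (auto simp: sig_def n x valid_def successively_Cons)
      next
        case c: False
        then show ?thesis using v \<open>b\<close> gA
          by (cases L) (auto simp: sig_def n x valid_def okl_def adj_def inv_letter_def successively_Cons)
      qed
    next
      case False
      show ?thesis
      proof (cases "k mod bse g = 0 \<and> L \<noteq> [] \<and> fst (hd L) = (g, True)")
        case True
        then show ?thesis using v \<open>\<not>b\<close> by (cases L) (auto simp: sig_def n x valid_def successively_Cons)
      next
        case c: False
        have "int (nat (k mod bse g)) < bse g" using pos by simp
        then show ?thesis using v \<open>\<not>b\<close> gA c pos
          by (cases L) (auto simp: sig_def n x valid_def okl_def adj_def inv_letter_def successively_Cons)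
      qed
    qed
  qed
qed

lemma act_valid: "valid n \<Longrightarrow> valid (act w n)"
  by (induction w) (auto intro: sig_valid)

lemma sig_inv: "valid n \<Longrightarrow> sig x (sig (inv_letter x) n) = n"
proof -
  assume v: "valid n"
  obtain k L where n: "n = (k, L)" by fastforce
  obtain g b where x: "x = (g, b)" by fastforce
  show ?thesis
  proof (cases "g = GA")
    case True then show ?thesis by (auto simp: sig_def n x inv_letter_def)
  next
    case False
    note gA = False
    have pos: "0 < bse g" using bse_gt1[of g] by simp
    show ?thesis
    proof (cases b)
      case True
      have e: "bse g * (k div bse g) + k mod bse g = k" by simp
      show ?thesis
      proof (cases "k mod bse g = 0 \<and> L \<noteq> [] \<and> fst (hd L) = (g, True)")
        case c: True
        then obtain r L' where L: "L = ((g,True), r) # L'" by (cases L) auto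
        have r0: "r = 0" using v gA by (simp add: n L valid_def okl_def)
        have "L' \<noteq> [] \<Longrightarrow> fst (hd L') \<noteq> (g, False)"
          using v by (auto simp: n L valid_def successively_Cons adj_def inv_letter_def r0)
        then show ?thesis using c True gA e by (auto simp: sig_def n x inv_letter_def L r0)
      next
        case c: False
        then show ?thesis using True gA e pos by (auto simp: sig_def n x inv_letter_def)
      qed
    next
      case False
      show ?thesis
      proof (cases "L \<noteq> [] \<and> fst (hd L) = (g, False)")
        case c: True
        then obtain r L' where L: "L = ((g,False), r) # L'" by (cases L) auto
        have r: "int r < bse g" using v gA by (simp add: n L valid_def okl_def)
        have d: "(bse g * k + int r) div bse g = k" "(bse g * k + int r) mod bse g = int r"
          using r pos by (simp_all add: div_add1_eq)
        have "r = 0 \<Longrightarrow> L' \<noteq> [] \<Longrightarrow> fst (hd L') \<noteq> (g, True)"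
          using v by (auto simp: n L valid_def successively_Cons adj_def inv_letter_def)
        then show ?thesis using c False gA d by (auto simp: sig_def n x inv_letter_def L)
      next
        case c: False
        then show ?thesis using False gA pos by (auto simp: sig_def n x inv_letter_def)
      qed
    qed
  qed
qed

lemma sigA_pow: "((sig (GA, True)) ^^ m) n = (fst n + int m, snd n)"
  by (induction m) (auto simp: sig_def)

lemma sigAi_pow: "((sig (GA, False)) ^^ m) n = (fst n - int m, snd n)"
  by (induction m) (auto simp: sig_def)

lemma act_replicate: "act (replicate m x) n = ((sig x) ^^ m) n"
  by (induction m) auto

lemma sig_rel: "g \<noteq> GA \<Longrightarrow> sig (g, True) (sig (GA, True) n) = ((sig (GA, True)) ^^ (nat (bse g))) (sig (g, True) n)"
  using bse_gt1[of g] unfolding sigA_pow by (simp add: sig_def algebra_simps)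

lemma act_rel: "r \<in> relators p q \<Longrightarrow> valid n \<Longrightarrow> act r n = n"
proof -
  assume r: "r \<in> relators p q" and v: "valid n"
  obtain g where g: "g \<noteq> GA" and r': "r = [(g, True), (GA, True), (g, False)] @ replicate (nat (bse g)) (GA, False)"
    proof (cases "r = [(GS, True), (GA, True), (GS, False)] @ replicate p (GA, False)")
    case True then show ?thesis using that[of GS] by (simp add: bse_def)
  next
    case False
    then have "r = [(GT, True), (GA, True), (GT, False)] @ replicate q (GA, False)"
      using r unfolding relators_def by blast
    then show ?thesis using that[of GT] by (simp add: bse_def)
  qed
  define m where "m = act (replicate (nat (bse g)) (GA, False)) n"
  have vm: "valid m" using v by (simp add: m_def act_valid)
  have "act r n = sig (g, True) (sig (GA, True) (sig (g, False) m))" by (simp add: r' act_append m_def)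
  also have "\<dots> = ((sig (GA, True)) ^^ (nat (bse g))) (sig (g, True) (sig (g, False) m))"
    using sig_rel[OF g] by simp
  also have "sig (g, True) (sig (g, False) m) = m" using sig_inv[OF vm, of "(g,True)"] by (simp add: inv_letter_def)
  finally show ?thesis using bse_gt1[of g] by (simp add: m_def act_replicate sigA_pow sigAi_pow)
qed

lemma act_del_step: "(x, y) \<in> del_step p q \<Longrightarrow> valid n \<Longrightarrow> act x n = act y n"
proof (induction rule: del_step.induct)
  case (cancel u x v)
  have "valid (act v n)" using cancel act_valid by blast
  then have "sig x (sig (inv_letter x) (act v n)) = act v n" by (rule sig_inv)
  then show ?case by (simp add: act_append)
next
  case (relator r u v)
  then show ?case using act_rel act_valid by (simp add: act_append)
qed

lemma act_weq: "(x, y) \<in> word_eq p q \<Longrightarrow> valid n \<Longrightarrow> act x n = act y n"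
  unfolding word_eq_def
proof (induction rule: rtrancl_induct)
  case base then show ?case by simp
next
  case (step y z)
  then show ?case using act_del_step[of y z n] act_del_step[of z y n] by auto
qed

definition Phi :: "letter list \<Rightarrow> nf" where "Phi w = act w (0, [])"

lemma Phi_weq: "(x, y) \<in> word_eq p q \<Longrightarrow> Phi x = Phi y"
  by (simp add: Phi_def act_weq)

lemma Phi_valid: "valid (Phi w)" by (simp add: Phi_def act_valid)

end

context bsl begin

definition weqr (infix "=w=" 50) where "x =w= y \<longleftrightarrow> (x, y) \<in> word_eq p q"

lemma wrefl[simp]: "x =w= x" by (simp add: weqr_def)
lemma wsym: "x =w= y \<Longrightarrow> y =w= x" by (simp add: weqr_def weq_sym)
lemma wtrans[trans]: "x =w= y \<Longrightarrow> y =w= z \<Longrightarrow> x =w= z" unfolding weqr_def by (rule weq_trans)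
lemma wapp: "x =w= y \<Longrightarrow> x' =w= y' \<Longrightarrow> x @ x' =w= y @ y'" unfolding weqr_def by (rule weq_app)
lemma wcancel: "[a, inv_letter a] =w= []" unfolding weqr_def by (rule weq_cancel)
lemma wrel: "r \<in> relators p q \<Longrightarrow> r =w= []" unfolding weqr_def by (rule weq_rel)

lemma weq_Cons: "x =w= y \<Longrightarrow> a # x =w= a # y"
  using wapp[of "[a]" "[a]" x y] by simp

lemma weq_appL: "x =w= y \<Longrightarrow> u @ x =w= u @ y"
  using wapp[of u u x y] by simp

lemma weq_appR: "x =w= y \<Longrightarrow> x @ u =w= y @ u"
  using wapp[of x y u u] by simp

lemma weq_cancel': "a # inv_letter a # x =w= x"
  using weq_appR[OF wcancel[of a], of x] by simp

definition powa :: "int \<Rightarrow> letter list" where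
  "powa k = (if 0 \<le> k then replicate (nat k) (GA, True) else replicate (nat (- k)) (GA, False))"

lemma powa_0[simp]: "powa 0 = []" by (simp add: powa_def)

lemma powa_pos: "powa (int n) = replicate n (GA, True)" by (simp add: powa_def)
lemma powa_neg: "powa (- int n) = replicate n (GA, False)" by (auto simp: powa_def)

lemma powa_A1: "(GA, True) # powa k =w= powa (k + 1)"
proof (cases "0 \<le> k")
  case True
  then have "powa (k+1) = (GA, True) # powa k" by (simp add: powa_def nat_add_distrib del: replicate.simps add: replicate_Suc[symmetric])
  then show ?thesis by simp
next
  case False
  then obtain m where m: "k = - int (Suc m)" by (intro that[of "nat (- k - 1)"]) simp
  then have "powa k = (GA, False) # powa (k + 1)"
    by (simp only: powa_neg m) (simp add: powa_neg[of m, simplified])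
  then show ?thesis using weq_cancel'[of "(GA,True)" "powa (k+1)"] by (simp add: inv_letter_def)
qed

lemma powa_A2: "(GA, False) # powa k =w= powa (k - 1)"
proof (cases "0 < k")
  case True
  then obtain m where m: "k = int (Suc m)" by (intro that[of "nat (k - 1)"]) simp
  then have "powa k = (GA, True) # powa (k - 1)"
    by (simp only: powa_pos m) (simp add: powa_pos[of m, simplified])
  then show ?thesis using weq_cancel'[of "(GA,False)" "powa (k - 1)"] by (simp add: inv_letter_def)
next
  case False
  then obtain m where m: "k = - int m" by (intro that[of "nat (- k)"]) simp
  then have "k - 1 = - int (Suc m)" by simp
  then have "powa (k - 1) = (GA, False) # powa k"
    by (simp only: powa_neg m) simp
  then show ?thesis by simp
qed


lemma powa_add: "powa a @ powa b =w= powa (a + b)"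
proof (cases "0 \<le> a")
  case True
  then obtain n where a: "a = int n" by (intro that[of "nat a"]) simp
  have "powa (int n) @ powa b =w= powa (int n + b)"
  proof (induction n)
    case 0 then show ?case by simp
  next
    case (Suc n)
    have "powa (int (Suc n)) @ powa b = (GA, True) # (powa (int n) @ powa b)" by (simp only: powa_pos) simp
    also have "\<dots> =w= (GA, True) # powa (int n + b)" by (rule weq_Cons[OF Suc])
    also have "\<dots> =w= powa (int n + b + 1)" by (rule powa_A1)
    finally show ?case by (simp add: algebra_simps)
  qed
  then show ?thesis by (simp add: a)
next
  case False
  then obtain n where a: "a = - int n" by (intro that[of "nat (- a)"]) simp
  have "powa (- int n) @ powa b =w= powa (- int n + b)"
  proof (induction n)
    case 0 then show ?case by simp
  next
    case (Suc n)
    have "powa (- int (Suc n)) @ powa b = (GA, False) # (powa (- int n) @ powa b)" by (simp only: powa_neg) simp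
    also have "\<dots> =w= (GA, False) # powa (- int n + b)" by (rule weq_Cons[OF Suc])
    also have "\<dots> =w= powa (- int n + b - 1)" by (rule powa_A2)
    finally show ?case by (simp add: algebra_simps)
  qed
  then show ?thesis by (simp add: a)
qed

lemma rep_inv_cancel: "replicate n (inv_letter x) @ replicate n x =w= []"
proof (induction n)
  case 0 then show ?case by simp
next
  case (Suc n)
  have "replicate (Suc n) (inv_letter x) @ replicate (Suc n) x = [inv_letter x] @ (replicate n (inv_letter x) @ replicate n x) @ [x]"
    by (simp add: replicate_append_same[symmetric])
  also have "\<dots> =w= [inv_letter x] @ [] @ [x]" by (rule weq_appL[OF weq_appR[OF Suc]])
  also have "\<dots> =w= []" using wcancel[of "inv_letter x"] by (simp add: inv_letter_def)
  finally show ?case .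
qed

lemma rel_basic:
  assumes g: "g \<noteq> GA"
  shows "[(g, True), (GA, True)] =w= powa (bse g) @ [(g, True)]"
proof -
  define b where "b = nat (bse g)"
  have r: "[(g, True), (GA, True), (g, False)] @ replicate b (GA, False) \<in> relators p q"
    using g unfolding relators_def b_def bse_def by (cases g) auto
  have "[(g, True), (GA, True)] =w= [(g, True), (GA, True)] @ ([(g,False), (g, True)])"
    using weq_appL[OF wsym[OF wcancel[of "(g,False)"]], of "[(g, True), (GA, True)]"] by (simp add: inv_letter_def)
  also have "\<dots> = ([(g, True), (GA, True), (g, False)] @ []) @ [(g, True)]" by simp
  also have "\<dots> =w= ([(g, True), (GA, True), (g, False)] @ (replicate b (GA, False) @ replicate b (GA, True))) @ [(g, True)]"
  proof -
    have aux: "[] =w= replicate b (GA, False) @ replicate b (GA, True)"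
      using wsym[OF rep_inv_cancel[of b "(GA,True)"]] by (simp add: inv_letter_def)
    show ?thesis by (rule weq_appR[OF weq_appL[OF aux]])
  qed
  also have "\<dots> = ([(g, True), (GA, True), (g, False)] @ replicate b (GA, False)) @ (replicate b (GA, True) @ [(g, True)])"
    by simp
  also have "\<dots> =w= [] @ (replicate b (GA, True) @ [(g, True)])"
    by (rule weq_appR[OF wrel[OF r]])
  also have "\<dots> = powa (bse g) @ [(g, True)]"
    using bse_gt1[of g] by (simp add: powa_def b_def)
  finally show ?thesis .
qed

lemma powa_1: "powa 1 = [(GA, True)]" by (simp add: powa_def)

lemma rel_gen:
  assumes g: "g \<noteq> GA"
  shows "(g, True) # powa k =w= powa (bse g * k) @ [(g, True)]"
proof (induction k rule: int_induct[where k = 0])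
  case base then show ?case by simp
next
  case (step1 k)
  have "(g, True) # powa (k + 1) =w= (g, True) # (powa 1 @ powa k)"
    using weq_Cons[OF wsym[OF powa_add[of 1 k]], of "(g, True)"] by (simp add: add.commute)
  also have "\<dots> = [(g, True), (GA, True)] @ powa k" by (simp add: powa_1)
  also have "\<dots> =w= (powa (bse g) @ [(g, True)]) @ powa k" by (rule weq_appR[OF rel_basic[OF g]])
  also have "\<dots> = powa (bse g) @ ((g, True) # powa k)" by simp
  also have "\<dots> =w= powa (bse g) @ (powa (bse g * k) @ [(g, True)])" by (rule weq_appL[OF step1(2)])
  also have "\<dots> = (powa (bse g) @ powa (bse g * k)) @ [(g, True)]" by simp
  also have "\<dots> =w= powa (bse g * (k+1)) @ [(g, True)]"
    using weq_appR[OF powa_add[of "bse g" "bse g * k"], of "[(g, True)]"] by (simp add: algebra_simps)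
  finally show ?case .
next
  case (step2 k)
  have "(g, True) # powa (k - 1) =w= powa (- bse g) @ powa (bse g) @ ((g, True) # powa (k - 1))"
  proof -
    have "powa (- bse g) @ powa (bse g) =w= []" using powa_add[of "- bse g" "bse g"] by simp
    then show ?thesis using weq_appR[of "powa (- bse g) @ powa (bse g)" "[]" "(g, True) # powa (k - 1)"]
      by (simp add: wsym)
  qed
  also have "\<dots> = powa (- bse g) @ (powa (bse g) @ [(g, True)]) @ powa (k - 1)" by simp
  also have "\<dots> =w= powa (- bse g) @ [(g, True), (GA, True)] @ powa (k - 1)"
    by (rule weq_appL[OF weq_appR[OF wsym[OF rel_basic[OF g]]]])
  also have "\<dots> = powa (- bse g) @ ((g, True) # (powa 1 @ powa (k - 1)))" by (simp add: powa_1)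
  also have "\<dots> =w= powa (- bse g) @ ((g, True) # powa k)"
    using weq_appL[OF weq_Cons[OF powa_add[of 1 "k - 1"]], of "powa (- bse g)" "(g, True)"] by simp
  also have "\<dots> =w= powa (- bse g) @ (powa (bse g * k) @ [(g, True)])" by (rule weq_appL[OF step2(2)])
  also have "\<dots> = (powa (- bse g) @ powa (bse g * k)) @ [(g, True)]" by simp
  also have "\<dots> =w= powa (bse g * (k - 1)) @ [(g, True)]"
    using weq_appR[OF powa_add[of "- bse g" "bse g * k"], of "[(g, True)]"] by (simp add: algebra_simps)
  finally show ?case .
qed

end

context bsl begin

definition wdL :: "(letter \<times> nat) list \<Rightarrow> letter list" where
  "wdL L = concat (map (\<lambda>y. fst y # powa (int (snd y))) L)"

definition wd :: "nf \<Rightarrow> letter list" where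
  "wd n = powa (fst n) @ wdL (snd n)"

lemma wdL_Nil[simp]: "wdL [] = []" by (simp add: wdL_def)
lemma wdL_Cons[simp]: "wdL (y # L) = fst y # powa (int (snd y)) @ wdL L" by (simp add: wdL_def)
lemma wdL_append[simp]: "wdL (L @ M) = wdL L @ wdL M" by (simp add: wdL_def)

lemma rel_inv:
  assumes g: "g \<noteq> GA"
  shows "(g, False) # powa (bse g * j) =w= powa j @ [(g, False)]"
proof -
  have "(g, False) # powa (bse g * j) =w= (g, False) # powa (bse g * j) @ [(g, True), (g, False)]"
    using weq_appL[OF wsym[OF wcancel[of "(g,True)"]], of "(g, False) # powa (bse g * j)"]
    by (simp add: inv_letter_def)
  also have "\<dots> = [(g, False)] @ (powa (bse g * j) @ [(g, True)]) @ [(g, False)]" by simp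
  also have "\<dots> =w= [(g, False)] @ ((g, True) # powa j) @ [(g, False)]"
    by (rule weq_appL[OF weq_appR[OF wsym[OF rel_gen[OF g]]]])
  also have "\<dots> = (g, False) # inv_letter (g, False) # (powa j @ [(g, False)])" by (simp add: inv_letter_def)
  also have "\<dots> =w= powa j @ [(g, False)]" by (rule weq_cancel')
  finally show ?thesis .
qed

lemma sig_wd:
  assumes v: "valid n"
  shows "x # wd n =w= wd (sig x n)"
proof -
  obtain k L where n: "n = (k, L)" by fastforce
  obtain g b where x: "x = (g, b)" by fastforce
  show ?thesis
  proof (cases "g = GA")
    case True
    show ?thesis
    proof (cases b)
      case True
      then show ?thesis using \<open>g = GA\<close> weq_appR[OF powa_A1[of k], of "wdL L"]
        by (simp add: sig_def n x wd_def)
    next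
      case False
      then show ?thesis using \<open>g = GA\<close> weq_appR[OF powa_A2[of k], of "wdL L"]
        by (simp add: sig_def n x wd_def)
    qed
  next
    case False
    note gA = False
    have pos: "0 < bse g" using bse_gt1[of g] by simp
    show ?thesis
    proof (cases b)
      case True
      have A: "x # wd n =w= powa (bse g * k) @ (g, True) # wdL L"
        using weq_appR[OF rel_gen[OF gA, of k], of "wdL L"] by (simp add: x n wd_def True)
      show ?thesis
      proof (cases "L \<noteq> [] \<and> fst (hd L) = (g, False)")
        case c: True
        then obtain r L' where L: "L = ((g,False), r) # L'" by (cases L) auto
        note A
        also have "powa (bse g * k) @ (g, True) # wdL L = powa (bse g * k) @ ((g, True) # inv_letter (g, True) # powa (int r) @ wdL L')"
          by (simp add: L inv_letter_def)
        also have "\<dots> =w= powa (bse g * k) @ (powa (int r) @ wdL L')"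
          by (rule weq_appL[OF weq_cancel'])
        also have "\<dots> = (powa (bse g * k) @ powa (int r)) @ wdL L'" by simp
        also have "\<dots> =w= powa (bse g * k + int r) @ wdL L'" by (rule weq_appR[OF powa_add])
        also have "\<dots> = wd (sig x n)" using True gA by (simp add: sig_def x n L wd_def)
        finally show ?thesis .
      next
        case c: False
        have "sig x n = (bse g * k, ((g,True),0) # L)" using c True gA by (auto simp: sig_def x n)
        then show ?thesis using A by (simp add: wd_def)
      qed
    next
      case False
      define j where "j = k div bse g"
      define r where "r = k mod bse g"
      have kr: "k = bse g * j + r" by (simp add: j_def r_def)
      have r0: "0 \<le> r" using pos by (simp add: r_def)
      have A: "x # wd n =w= powa j @ (g, False) # powa r @ wdL L"
      proof -
        have "x # wd n = (g, False) # powa (bse g * j + r) @ wdL L" by (simp add: x n wd_def False kr)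
        also have "\<dots> =w= (g, False) # (powa (bse g * j) @ powa r) @ wdL L"
          by (rule weq_Cons[OF weq_appR[OF wsym[OF powa_add]]])
        also have "\<dots> = ((g, False) # powa (bse g * j)) @ powa r @ wdL L" by simp
        also have "\<dots> =w= (powa j @ [(g, False)]) @ powa r @ wdL L"
          by (rule weq_appR[OF rel_inv[OF gA]])
        finally show ?thesis by simp
      qed
      show ?thesis
      proof (cases "r = 0 \<and> L \<noteq> [] \<and> fst (hd L) = (g, True)")
        case c: True
        then obtain r' L' where L: "L = ((g,True), r') # L'" by (cases L) auto
        have r'0: "r' = 0" using v gA by (simp add: n L valid_def okl_def)
        note A
        also have "powa j @ (g, False) # powa r @ wdL L = powa j @ ((g, False) # inv_letter (g, False) # wdL L')"
          using c by (simp add: L r'0 inv_letter_def)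
        also have "\<dots> =w= powa j @ wdL L'" by (rule weq_appL[OF weq_cancel'])
        also have "\<dots> = wd (sig x n)" using c False gA by (simp add: sig_def x n L wd_def j_def r_def)
        finally show ?thesis .
      next
        case c: False
        have "sig x n = (j, ((g,False), nat r) # L)" using c False gA by (auto simp: sig_def x n j_def r_def)
        then show ?thesis using A r0 by (simp add: wd_def)
      qed
    qed
  qed
qed

lemma wd_Phi: "w =w= wd (Phi w)"
proof (induction w)
  case Nil then show ?case by (simp add: Phi_def wd_def)
next
  case (Cons x w)
  have "x # w =w= x # wd (Phi w)" by (rule weq_Cons[OF Cons])
  also have "\<dots> =w= wd (sig x (Phi w))" by (rule sig_wd[OF Phi_valid])
  finally show ?case by (simp add: Phi_def)
qed

lemma Phi_eq_iff: "Phi u = Phi v \<longleftrightarrow> u =w= v"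
proof
  assume "Phi u = Phi v"
  then show "u =w= v" using wd_Phi[of u] wd_Phi[of v] by (metis wsym wtrans)
next
  assume "u =w= v" then show "Phi u = Phi v" by (simp add: weqr_def Phi_weq)
qed

lemma act_powa: "act (powa k) n = (fst n + k, snd n)"
  by (cases "0 \<le> k") (auto simp: powa_def act_replicate sigA_pow sigAi_pow)

lemma act_wdL: "valid (0, L) \<Longrightarrow> act (wdL L) (0, []) = (0, L)"
proof (induction L)
  case Nil then show ?case by simp
next
  case (Cons y L)
  obtain g b r where y: "y = ((g, b), r)" by (cases y) auto
  have vL: "valid (0, L)" using Cons.prems valid_cons by blast
  have oky: "okl y" using Cons.prems valid_cons by blast
  have gA: "g \<noteq> GA" using oky by (simp add: okl_def y)
  have pos: "0 < bse g" using bse_gt1[of g] by simp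
  have "act (wdL (y # L)) (0, []) = sig (g, b) (int r, L)"
    using Cons.IH[OF vL] by (simp add: act_append act_powa y)
  also have "\<dots> = (0, y # L)"
  proof (cases b)
    case True
    then have r0: "r = 0" using oky by (simp add: okl_def y)
    have "L \<noteq> [] \<Longrightarrow> fst (hd L) \<noteq> (g, False)"
      using Cons.prems True r0 by (cases L) (auto simp: valid_def adj_def inv_letter_def y)
    then show ?thesis using True gA r0 by (auto simp: sig_def y)
  next
    case False
    then have rb: "int r < bse g" using oky by (simp add: okl_def y)
    have "r = 0 \<Longrightarrow> L \<noteq> [] \<Longrightarrow> fst (hd L) \<noteq> (g, True)"
      using Cons.prems False by (cases L) (auto simp: valid_def adj_def inv_letter_def y)
    then show ?thesis using False gA rb by (auto simp: sig_def y)
  qed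
  finally show ?case .
qed

lemma Phi_wd: "valid n \<Longrightarrow> Phi (wd n) = n"
proof -
  assume v: "valid n"
  obtain k L where n: "n = (k, L)" by fastforce
  have "valid (0, L)" using v n valid_k by blast
  then show ?thesis by (simp add: Phi_def wd_def act_append act_wdL act_powa n)
qed

end

context bsl begin

definition rho :: "gen \<Rightarrow> nf \<Rightarrow> nf" where
  "rho g n = (if snd n \<noteq> [] \<and> last (snd n) = ((g, False), 0) then (fst n, butlast (snd n))
              else (fst n, snd n @ [((g, True), 0)]))"

lemma sig_rho: "g \<noteq> GA \<Longrightarrow> sig x (rho g n) = rho g (sig x n)"
proof -
  assume gA: "g \<noteq> GA"
  obtain k L where n: "n = (k, L)" by fastforce
  have pm: "0 \<le> k mod bse (fst x)" using bse_gt1[of "fst x"] by simp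
  show ?thesis
  proof (cases L)
    case Nil then show ?thesis using gA pm by (auto simp: sig_def rho_def n)
  next
    case (Cons y L')
    show ?thesis
    proof (cases L')
      case Nil then show ?thesis using gA by (auto simp: sig_def rho_def n Cons)
    next
      case (Cons z L'')
      then show ?thesis using gA by (auto simp: sig_def rho_def n \<open>L = y # L'\<close>)
    qed
  qed
qed

lemma act_rho: "g \<noteq> GA \<Longrightarrow> act w (rho g n) = rho g (act w n)"
  by (induction w) (auto simp: sig_rho)

fun rhoW :: "gen list \<Rightarrow> nf \<Rightarrow> nf" where
  "rhoW [] n = n"
| "rhoW (y # ys) n = rhoW ys (rho y n)"

definition posz :: "gen \<Rightarrow> letter \<times> nat" where "posz y = ((y, True), 0)"
definition negz :: "gen \<Rightarrow> letter \<times> nat" where "negz y = ((y, False), 0)"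

lemma Phi_snoc: "g \<noteq> GA \<Longrightarrow> Phi (w @ [(g, True)]) = rho g (Phi w)"
proof -
  assume gA: "g \<noteq> GA"
  have "Phi (w @ [(g, True)]) = act w (sig (g, True) (0, []))" by (simp add: Phi_def act_append)
  also have "sig (g, True) (0, []) = rho g (0, [])" using gA by (simp add: sig_def rho_def)
  finally show ?thesis by (simp add: act_rho gA Phi_def)
qed

lemma Phi_rhoW: "GA \<notin> set ys \<Longrightarrow> Phi (w @ map (\<lambda>y. (y, True)) ys) = rhoW ys (Phi w)"
proof (induction ys arbitrary: w)
  case Nil then show ?case by simp
next
  case (Cons y ys)
  have "Phi (w @ map (\<lambda>y. (y, True)) (y # ys)) = Phi ((w @ [(y, True)]) @ map (\<lambda>y. (y, True)) ys)" by simp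
  also have "\<dots> = rhoW ys (Phi (w @ [(y, True)]))" using Cons.IH[of "w @ [(y, True)]"] Cons.prems by simp
  also have "\<dots> = rhoW (y # ys) (Phi w)" using Cons.prems Phi_snoc[of y w] by auto
  finally show ?case .
qed

lemma right_lemma:
  "\<exists>ys1 ys2 L1 L2. ys = ys1 @ ys2 \<and> L = L1 @ L2 \<and> L2 = map negz (rev ys1)
      \<and> rhoW ys (k, L) = (k, L1 @ map posz ys2)"
proof (induction ys arbitrary: L)
  case Nil then show ?case by auto
next
  case (Cons y ys)
  show ?case
  proof (cases "L \<noteq> [] \<and> last L = ((y, False), 0)")
    case True
    then obtain L0 where L: "L = L0 @ [negz y]" by (metis append_butlast_last_id negz_def)
    have r: "rho y (k, L) = (k, L0)" using True by (simp add: rho_def L)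
    obtain ys1 ys2 L1 L2 where "ys = ys1 @ ys2" "L0 = L1 @ L2" "L2 = map negz (rev ys1)"
      "rhoW ys (k, L0) = (k, L1 @ map posz ys2)" using Cons.IH[of L0] by blast
    then show ?thesis using r L
      apply - apply (rule exI[of _ "y # ys1"], rule exI[of _ ys2], rule exI[of _ L1], rule exI[of _ "L2 @ [negz y]"]) by simp
  next
    case False
    have r: "rho y (k, L) = (k, L @ [posz y])" using False by (auto simp: rho_def posz_def)
    obtain ys1 ys2 L1 L2 where d: "ys = ys1 @ ys2" "L @ [posz y] = L1 @ L2" "L2 = map negz (rev ys1)"
      "rhoW ys (k, L @ [posz y]) = (k, L1 @ map posz ys2)" using Cons.IH[of "L @ [posz y]"] by blast
    have "ys1 = []"
    proof (rule ccontr)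
      assume "ys1 \<noteq> []"
      then have "L2 \<noteq> []" "last L2 = negz (hd ys1)" using d(3) by (auto simp: last_map last_rev)
      then have "last (L @ [posz y]) = negz (hd ys1)" using d(2) by (metis last_appendR)
      then show False by (simp add: posz_def negz_def)
    qed
    then show ?thesis using d r
      apply - apply (rule exI[of _ "[]"], rule exI[of _ "y # ys"], rule exI[of _ L], rule exI[of _ "[]"]) by simp
  qed
qed

definition prodb :: "gen list \<Rightarrow> int" where "prodb ys = prod_list (map bse ys)"

lemma left_lemma:
  "GA \<notin> set ys \<Longrightarrow> \<exists>ys1 ys2 L1 L2. ys = ys1 @ ys2 \<and> L = L1 @ L2 \<and> map fst L1 = map (\<lambda>y. (y, False)) (rev ys2)
      \<and> snd (act (map (\<lambda>y. (y, True)) ys) (k, L)) = map posz ys1 @ L2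
      \<and> (ys2 = [] \<longrightarrow> fst (act (map (\<lambda>y. (y, True)) ys) (k, L)) = prodb ys * k)"
proof (induction ys)
  case Nil then show ?case by (auto simp: prodb_def)
next
  case (Cons y ys)
  then have gA: "y \<noteq> GA" by auto
  obtain ys1 ys2 L1 L2 where d: "ys = ys1 @ ys2" "L = L1 @ L2" "map fst L1 = map (\<lambda>y. (y, False)) (rev ys2)"
    "snd (act (map (\<lambda>y. (y, True)) ys) (k, L)) = map posz ys1 @ L2"
    "ys2 = [] \<longrightarrow> fst (act (map (\<lambda>y. (y, True)) ys) (k, L)) = prodb ys * k"
    using Cons.IH Cons.prems by (meson list.set_intros(2))
  define m where "m = act (map (\<lambda>y. (y, True)) ys) (k, L)"
  have e: "act (map (\<lambda>y. (y, True)) (y # ys)) (k, L) = sig (y, True) m" by (simp add: m_def)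
  show ?case
  proof (cases "ys1 = []")
    case False
    then have "snd m \<noteq> [] \<and> fst (hd (snd m)) \<noteq> (y, False)" using d(4) by (cases ys1) (auto simp: m_def posz_def)
    then have S: "sig (y, True) m = (bse y * fst m, posz y # snd m)" using gA by (auto simp: sig_def posz_def)
    have K: "ys2 = [] \<longrightarrow> fst (act (map (\<lambda>y. (y, True)) (y # ys)) (k, L)) = prodb (y # ys) * k"
      using S d(5)[folded m_def] e by (simp add: prodb_def)
    have Sn: "snd (act (map (\<lambda>y. (y, True)) (y # ys)) (k, L)) = map posz (y # ys1) @ L2"
      using S d(4)[folded m_def] e by simp
    have Y: "y # ys = (y # ys1) @ ys2" using d(1) by simp
    show ?thesis using K Sn Y d(2) d(3) by blast
  next
    case True
    show ?thesis
    proof (cases "L2 \<noteq> [] \<and> fst (hd L2) = (y, False)")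
      case c: True
      then obtain z L2' where L2: "L2 = z # L2'" "fst z = (y, False)" by (cases L2) auto
      have "snd (sig (y, True) m) = L2'" using gA d(4) True L2 by (simp add: sig_def m_def)
      moreover have "y # ys = [] @ (y # ys2)" using d(1) True by simp
      moreover have "L = (L1 @ [z]) @ L2'" using d(2) L2 by simp
      moreover have "map fst (L1 @ [z]) = map (\<lambda>y. (y, False)) (rev (y # ys2))" using d(3) L2 by simp
      ultimately show ?thesis using e
        apply - apply (rule exI[of _ "[]"], rule exI[of _ "y # ys2"], rule exI[of _ "L1 @ [z]"], rule exI[of _ "L2'"]) by simp
    next
      case c: False
      then have S: "sig (y, True) m = (bse y * fst m, posz y # snd m)" using gA d(4) True by (auto simp: sig_def posz_def m_def)
      have K: "ys2 = [] \<longrightarrow> fst (act (map (\<lambda>y. (y, True)) (y # ys)) (k, L)) = prodb (y # ys) * k"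
        using S d(5)[folded m_def] e by (simp add: prodb_def)
      have Sn: "snd (act (map (\<lambda>y. (y, True)) (y # ys)) (k, L)) = map posz [y] @ L2"
        using S d(4)[folded m_def] e True by simp
      have Y: "y # ys = [y] @ ys2" using d(1) True by simp
      show ?thesis using K Sn Y d(2) d(3) by blast
    qed
  qed
qed

end

context bsl begin

lemma prodb_gt1: "ys \<noteq> [] \<Longrightarrow> 1 < prodb ys"
proof (induction ys)
  case Nil then show ?case by simp
next
  case (Cons y ys)
  show ?case
  proof (cases "ys = []")
    case True then show ?thesis using bse_gt1[of y] by (simp add: prodb_def)
  next
    case False
    then have "1 < prodb ys" using Cons by simp
    moreover have "1 < bse y" by (rule bse_gt1)
    ultimately have "1 * 1 < bse y * prodb ys" by (intro mult_strict_mono) auto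
    then show ?thesis by (simp add: prodb_def)
  qed
qed

lemma comm_list:
  assumes e: "XS @ L = L @ XS" and "XS \<noteq> []" and h: "hd XS \<notin> set (tl XS)" and "L \<noteq> []"
  shows "\<exists>L0. L = L0 @ XS"
proof (cases "length XS \<le> length L")
  case True
  have "rev L @ rev XS = rev XS @ rev L" using e by (metis rev_append)
  then have "take (length XS) (rev L @ rev XS) = take (length XS) (rev XS @ rev L)" by simp
  then have "take (length XS) (rev L) = rev XS" using True by simp
  then have "rev L = rev XS @ drop (length XS) (rev L)" by (metis append_take_drop_id)
  then have "L = rev (drop (length XS) (rev L)) @ XS" by (metis rev_append rev_rev_ident)
  then show ?thesis by blast
next
  case False
  have "drop (length L) (XS @ L) = drop (length L) (L @ XS)" using e by simp
  then have XS: "XS = drop (length L) XS @ L" using False by simp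
  have "take (length L) (XS @ L) = take (length L) (L @ XS)" using e by simp
  then have L: "L = take (length L) XS" using False by simp
  have ne: "drop (length L) XS \<noteq> []" using False by simp
  have "tl XS = tl (drop (length L) XS) @ L" using XS ne by (metis tl_append_if)
  then have "set L \<subseteq> set (tl XS)" by auto
  moreover have "hd L = hd XS" using L \<open>L \<noteq> []\<close> by (metis hd_take length_greater_0_conv)
  ultimately show ?thesis using h \<open>L \<noteq> []\<close> by (metis hd_in_set subsetD)
qed

lemma comm_cases:
  assumes ne: "ys \<noteq> []" and gA: "GA \<notin> set ys" and hd: "hd ys \<notin> set (tl ys)"
    and v: "valid (k, L)"
    and eq: "act (map (\<lambda>y. (y, True)) ys) (k, L) = rhoW ys (k, L)"
  shows "(L = [] \<and> k = 0) \<or> (\<exists>L0. L = L0 @ map posz ys \<and> rhoW ys (k, L0) = (k, L))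
         \<or> (\<exists>L0. L = L0 @ map negz (rev ys) \<and> rhoW ys (k, L) = (k, L0))"
proof -
  obtain a1 a2 b1 b2 where l: "ys = a1 @ a2" "L = b1 @ b2" "map fst b1 = map (\<lambda>y. (y, False)) (rev a2)"
      "snd (act (map (\<lambda>y. (y, True)) ys) (k, L)) = map posz a1 @ b2"
      "a2 = [] \<longrightarrow> fst (act (map (\<lambda>y. (y, True)) ys) (k, L)) = prodb ys * k"
    using left_lemma[OF gA, of L k] by blast
  obtain c1 c2 d1 d2 where r: "ys = c1 @ c2" "L = d1 @ d2" "d2 = map negz (rev c1)"
      "rhoW ys (k, L) = (k, d1 @ map posz c2)"
    using right_lemma[of ys L k] by blast
  have E: "map posz a1 @ b2 = d1 @ map posz c2" using l(4) r(4) eq by simp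
  have lb1: "length b1 = length a2" using l(3) by (metis length_map length_rev)
  have la2: "length a2 = length c1"
  proof -
    have "length a1 + length b2 = length d1 + length c2" using arg_cong[OF E, of length] by simp
    moreover have "length L = length b1 + length b2" using l(2) by simp
    moreover have "length L = length d1 + length d2" using r(2) by simp
    moreover have "length ys = length a1 + length a2" using l(1) by simp
    moreover have "length ys = length c1 + length c2" using r(1) by simp
    moreover have "length d2 = length c1" using r(3) by simp
    ultimately show ?thesis using lb1 by linarith
  qed
  show ?thesis
  proof (cases "c1 = []")
    case True
    then have "a2 = []" using la2 by simp
    then have "b1 = []" using lb1 by simp
    have "d2 = []" using r(3) True by simp
    have Lb: "L = b2" "L = d1" using l(2) r(2) \<open>b1 = []\<close> \<open>d2 = []\<close> by auto
    have a1: "a1 = ys" "c2 = ys" using l(1) r(1) \<open>a2 = []\<close> True by auto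
    have XL: "map posz ys @ L = L @ map posz ys" using E Lb a1 by simp
    have kk: "prodb ys * k = k" using l(5) \<open>a2 = []\<close> eq r(4) by simp
    show ?thesis
    proof (cases "L = []")
      case True
      have "1 < prodb ys" using prodb_gt1[OF ne] .
      then have "k = 0" using kk by (metis mult_cancel_right1 less_irrefl)
      then show ?thesis using True by simp
    next
      case False
      have "hd (map posz ys) \<notin> set (tl (map posz ys))"
        using hd ne by (cases ys) (auto simp: posz_def)
      then obtain L0 where L0: "L = L0 @ map posz ys" using comm_list[OF XL] False ne by auto
      obtain e1 e2 f1 f2 where r0: "ys = e1 @ e2" "L0 = f1 @ f2" "f2 = map negz (rev e1)"
          "rhoW ys (k, L0) = (k, f1 @ map posz e2)"
        using right_lemma[of ys L0 k] by blast
      have "e1 = []"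
      proof (rule ccontr)
        assume "e1 \<noteq> []"
        then have "L0 \<noteq> []" "last L0 = negz (hd ys)" using r0 by (auto simp: last_map last_rev)
        then have "L = butlast L0 @ [negz (hd ys), posz (hd ys)] @ map posz (tl ys)"
          using L0 ne by (cases ys) (auto, metis append_butlast_last_id append_Cons append_Nil append_assoc)
        then have "successively adj (butlast L0 @ [negz (hd ys), posz (hd ys)] @ map posz (tl ys))"
          using v by (simp add: valid_def)
        then have "adj (negz (hd ys)) (posz (hd ys))"
          by (simp add: successively_append_iff)
        then show False by (simp add: adj_def negz_def posz_def inv_letter_def)
      qed
      then show ?thesis using r0 L0 by auto
    qed
  next
    case False
    note c1ne = False
    show ?thesis
    proof (cases "c2 = []")
      case True
      then have "c1 = ys" using r(1) by simp
      then show ?thesis using r True by auto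
    next
      case False
      have a2ne: "a2 \<noteq> []" using c1ne la2 by auto
      have a1ne: "a1 \<noteq> []"
      proof
        assume "a1 = []"
        then have lc: "length c1 = length ys" using la2 l(1) by simp
        have "length ys = length c1 + length c2" using r(1) by simp
        then show False using lc False by simp
      qed
      have hc: "hd c1 = hd ys" using r(1) c1ne by simp
      have "d2 \<noteq> []" "last d2 = negz (hd c1)" using r(3) c1ne by (auto simp: last_map last_rev)
      then have lastL: "last L = negz (hd ys)" using r(2) hc by simp
      have "last (d1 @ map posz c2) = posz (last c2)" using False by (simp add: last_map)
      then have lastE: "last (map posz a1 @ b2) = posz (last c2)" using E by simp
      show ?thesis
      proof (cases "b2 = []")
        case False
        then have "last L = last b2" using l(2) by simp
        then show ?thesis using lastE False lastL by (simp add: posz_def negz_def)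
      next
        case True
        then have "L = b1" using l(2) by simp
        then have "L \<noteq> []" using lb1 a2ne by auto
        have "fst (last L) \<in> set (map fst b1)" using \<open>L = b1\<close> \<open>L \<noteq> []\<close> by simp
        then have "(hd ys, False) \<in> (\<lambda>y. (y, False)) ` set a2" using l(3) lastL by (simp add: negz_def)
        then have "hd ys \<in> set a2" by auto
        moreover have "set a2 \<subseteq> set (tl ys)" using l(1) a1ne by (cases a1) auto
        ultimately show ?thesis using hd by auto
      qed
    qed
  qed
qed

end

lemma (in group) centraliser_subgroup:
  assumes h: "h \<in> carrier G" shows "subgroup (centraliser G h) G"
proof (rule subgroupI)
  show "centraliser G h \<subseteq> carrier G" by (auto simp: centraliser_def)
  show "centraliser G h \<noteq> {}" using h by (auto simp: centraliser_def)
next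
  fix a assume "a \<in> centraliser G h"
  then have a: "a \<in> carrier G" "h \<otimes> a = a \<otimes> h" by (auto simp: centraliser_def)
  have "h \<otimes> inv a = inv a \<otimes> (a \<otimes> h) \<otimes> inv a" using a h by (simp add: m_assoc[symmetric])
  also have "\<dots> = inv a \<otimes> h" using a h by (simp flip: a(2) add: m_assoc)
  finally show "inv a \<in> centraliser G h" using a by (simp add: centraliser_def)
next
  fix a b assume "a \<in> centraliser G h" "b \<in> centraliser G h"
  then have a: "a \<in> carrier G" "h \<otimes> a = a \<otimes> h" and b: "b \<in> carrier G" "h \<otimes> b = b \<otimes> h"
    by (auto simp: centraliser_def)
  have "h \<otimes> (a \<otimes> b) = (h \<otimes> a) \<otimes> b" using a(1) b(1) h by (simp add: m_assoc)
  also have "\<dots> = (a \<otimes> h) \<otimes> b" using a by simp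
  also have "\<dots> = a \<otimes> (h \<otimes> b)" using a(1) b(1) h by (simp add: m_assoc)
  also have "\<dots> = a \<otimes> (b \<otimes> h)" using b by simp
  also have "\<dots> = (a \<otimes> b) \<otimes> h" using a(1) b(1) h by (simp add: m_assoc)
  finally show "a \<otimes> b \<in> centraliser G h" using a b by (simp add: centraliser_def)
qed

lemma (in group) generate_sub_centraliser:
  assumes h: "h \<in> carrier G" shows "generate G {h} \<subseteq> centraliser G h"
  using generate_subgroup_incl[OF _ centraliser_subgroup[OF h]] h by (auto simp: centraliser_def)

context bsl begin

abbreviation "BG \<equiv> BS_group p q"

definition cls :: "letter list \<Rightarrow> letter list set" where "cls w = word_eq p q `` {w}"

lemma cls_eq_iff: "cls u = cls v \<longleftrightarrow> u =w= v"
  unfolding cls_def weqr_def by (rule eq_equiv_class_iff[OF equiv_weq]) auto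

lemma cls_eq_Phi: "cls u = cls v \<longleftrightarrow> Phi u = Phi v"
  by (simp add: cls_eq_iff Phi_eq_iff)

lemma carrier_G: "carrier BG = range cls"
  by (auto simp: BS_group_def cls_def quotient_def)

lemma cls_in[simp]: "cls u \<in> carrier BG" by (simp add: carrier_G)

lemma mult_cls: "cls u \<otimes>\<^bsub>BG\<^esub> cls v = cls (u @ v)"
proof -
  have A: "cls (x @ y) = cls (u @ v)" if "x \<in> cls u" "y \<in> cls v" for x y
  proof -
    have "u =w= x" "v =w= y" using that by (auto simp: cls_def weqr_def)
    then have "x @ y =w= u @ v" by (rule wsym[OF wapp])
    then show ?thesis by (simp add: cls_eq_iff)
  qed
  have B: "u \<in> cls u" "v \<in> cls v" by (auto simp: cls_def)
  have "cls u \<otimes>\<^bsub>BG\<^esub> cls v = (\<Union>x\<in>cls u. \<Union>y\<in>cls v. cls (x @ y))"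
    by (simp add: BS_group_def cls_def)
  also have "\<dots> = (\<Union>x\<in>cls u. \<Union>y\<in>cls v. cls (u @ v))"
    using A by (intro SUP_cong refl) auto
  also have "\<dots> = cls (u @ v)" using B by auto
  finally show ?thesis .
qed

lemma one_G: "\<one>\<^bsub>BG\<^esub> = cls []" by (simp add: BS_group_def cls_def)

definition invw :: "letter list \<Rightarrow> letter list" where "invw u = rev (map inv_letter u)"

lemma invw_cancel: "invw u @ u =w= []"
proof (induction u)
  case Nil then show ?case by (simp add: invw_def)
next
  case (Cons x u)
  have "invw (x # u) @ x # u = invw u @ ([inv_letter x, x] @ u)" by (simp add: invw_def)
  also have "\<dots> =w= invw u @ ([] @ u)"
    using wcancel[of "inv_letter x"] by (intro weq_appL weq_appR) (simp add: inv_letter_def)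
  also have "\<dots> =w= []" using Cons by simp
  finally show ?case .
qed

lemma group_G: "group BG"
proof (rule groupI)
  fix x y assume "x \<in> carrier BG" "y \<in> carrier BG"
  then show "x \<otimes>\<^bsub>BG\<^esub> y \<in> carrier BG" by (auto simp: carrier_G mult_cls)
next
  show "\<one>\<^bsub>BG\<^esub> \<in> carrier BG" by (simp add: one_G)
next
  fix x y z assume "x \<in> carrier BG" "y \<in> carrier BG" "z \<in> carrier BG"
  then show "x \<otimes>\<^bsub>BG\<^esub> y \<otimes>\<^bsub>BG\<^esub> z = x \<otimes>\<^bsub>BG\<^esub> (y \<otimes>\<^bsub>BG\<^esub> z)" by (auto simp: carrier_G mult_cls)
next
  fix x assume "x \<in> carrier BG"
  then show "\<one>\<^bsub>BG\<^esub> \<otimes>\<^bsub>BG\<^esub> x = x" by (auto simp: carrier_G mult_cls one_G)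
next
  fix x assume "x \<in> carrier BG"
  then obtain u where "x = cls u" by (auto simp: carrier_G)
  then have "cls (invw u) \<otimes>\<^bsub>BG\<^esub> x = \<one>\<^bsub>BG\<^esub>" by (simp add: mult_cls one_G cls_eq_iff invw_cancel)
  then show "\<exists>y\<in>carrier BG. y \<otimes>\<^bsub>BG\<^esub> x = \<one>\<^bsub>BG\<^esub>" by auto
qed

lemma pow_cls: "cls u [^]\<^bsub>BG\<^esub> (n::nat) = cls (concat (replicate n u))"
proof (induction n)
  case 0 then show ?case by (simp add: one_G)
next
  case (Suc n)
  then show ?case by (simp add: mult_cls replicate_append_same[symmetric])
qed

lemma main_incl:
  assumes ne: "ys \<noteq> []" and gA: "GA \<notin> set ys" and hd: "hd ys \<notin> set (tl ys)"
  defines "h \<equiv> cls (map (\<lambda>y. (y, True)) ys)"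
  shows "centraliser BG h \<subseteq> generate BG {h}"
proof -
  interpret grp: group BG by (rule group_G)
  have hc: "h \<in> carrier BG" by (simp add: h_def)
  have sub: "subgroup (generate BG {h}) BG" using hc by (intro grp.generate_is_subgroup) auto
  have hg: "h \<in> generate BG {h}" by (rule generate.incl) simp
  have csub: "subgroup (centraliser BG h) BG" by (rule grp.centraliser_subgroup[OF hc])
  have hcen: "h \<in> centraliser BG h" using hc by (simp add: centraliser_def)
  define hw where "hw = map (\<lambda>y. (y, True)) ys"
  have "\<forall>w. length (snd (Phi w)) = N \<longrightarrow> cls w \<in> centraliser BG h \<longrightarrow> cls w \<in> generate BG {h}" for N
  proof (induction N rule: less_induct)
    case (less N)
    show ?case
    proof (intro allI impI)
      fix w assume lw: "length (snd (Phi w)) = N" and wc: "cls w \<in> centraliser BG h"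
      obtain k L where PW: "Phi w = (k, L)" by fastforce
      have v: "valid (k, L)" using Phi_valid[of w] PW by simp
      have "h \<otimes>\<^bsub>BG\<^esub> cls w = cls w \<otimes>\<^bsub>BG\<^esub> h" using wc by (simp add: centraliser_def)
      then have "Phi (hw @ w) = Phi (w @ hw)" by (simp add: h_def hw_def mult_cls cls_eq_Phi)
      then have eq: "act hw (k, L) = rhoW ys (k, L)"
        using Phi_rhoW[OF gA, of w] PW by (simp add: Phi_def act_append hw_def)
      show "cls w \<in> generate BG {h}"
        using comm_cases[OF ne gA hd v eq[unfolded hw_def]]
      proof (elim disjE exE conjE)
        assume "L = []" "k = 0"
        then have "cls w = cls []" using PW by (simp add: cls_eq_Phi Phi_def)
        then show ?thesis by (simp add: one_G[symmetric] generate.one)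
      next
        fix L0 assume L0: "L = L0 @ map posz ys" and r0: "rhoW ys (k, L0) = (k, L)"
        have v0: "valid (k, L0)" using v L0 by (simp add: valid_def successively_append_iff)
        define w0 where "w0 = wd (k, L0)"
        have P0: "Phi w0 = (k, L0)" using Phi_wd[OF v0] by (simp add: w0_def)
        have "Phi (w0 @ hw) = Phi w" using Phi_rhoW[OF gA, of w0] P0 r0 PW by (simp add: hw_def)
        then have ww: "cls w = cls w0 \<otimes>\<^bsub>BG\<^esub> h" by (simp add: h_def hw_def mult_cls cls_eq_Phi)
        have "cls w0 = cls w \<otimes>\<^bsub>BG\<^esub> inv\<^bsub>BG\<^esub> h" using ww hc by (simp add: grp.m_assoc)
        then have "cls w0 \<in> centraliser BG h"
          using wc hcen csub by (metis subgroup.m_closed subgroup.m_inv_closed)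
        moreover have "length (snd (Phi w0)) < N" using P0 lw PW L0 ne by (cases ys) auto
        ultimately have "cls w0 \<in> generate BG {h}" using less.IH by blast
        then show ?thesis using ww hg sub by (simp add: subgroup.m_closed)
      next
        fix L0 assume L0: "L = L0 @ map negz (rev ys)" and r0: "rhoW ys (k, L) = (k, L0)"
        have P1: "Phi (w @ hw) = (k, L0)" using Phi_rhoW[OF gA, of w] r0 PW by (simp add: hw_def)
        have ww: "cls (w @ hw) = cls w \<otimes>\<^bsub>BG\<^esub> h" by (simp add: h_def hw_def mult_cls)
        then have "cls (w @ hw) \<in> centraliser BG h"
          using wc hcen csub by (metis subgroup.m_closed)
        moreover have "length (snd (Phi (w @ hw))) < N" using P1 lw PW L0 ne by (cases ys) auto
        ultimately have "cls (w @ hw) \<in> generate BG {h}" using less.IH by blast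
        then have "cls (w @ hw) \<otimes>\<^bsub>BG\<^esub> inv\<^bsub>BG\<^esub> h \<in> generate BG {h}"
          using hg sub by (simp add: subgroup.m_closed subgroup.m_inv_closed)
        moreover have "cls (w @ hw) \<otimes>\<^bsub>BG\<^esub> inv\<^bsub>BG\<^esub> h = cls w" using ww hc by (simp add: grp.m_assoc)
        ultimately show ?thesis by simp
      qed
    qed
  qed
  moreover have "centraliser BG h \<subseteq> range cls" by (auto simp: centraliser_def carrier_G)
  ultimately show ?thesis by blast
qed

end

lemma concat_rep_single: "concat (replicate n [x]) = replicate n x"
  by (induction n) auto

theorem lemma3p2:
  fixes p q :: nat
  assumes "Factorial_Ring.prime p" and "Factorial_Ring.prime q" and "p \<noteq> q"
  defines "G \<equiv> BS_group p q"
    and "s \<equiv> gen_elem p q GS"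
    and "t \<equiv> gen_elem p q GT"
  shows "centraliser G t = generate G {t}
       \<and> centraliser G s = generate G {s}
       \<and> (\<forall>i::nat. centraliser G (s \<otimes>\<^bsub>G\<^esub> t [^]\<^bsub>G\<^esub> i)
                   = generate G {s \<otimes>\<^bsub>G\<^esub> t [^]\<^bsub>G\<^esub> i})"
proof -
  have p1: "1 < p" using assms(1) prime_gt_1_nat by blast
  have q1: "1 < q" using assms(2) prime_gt_1_nat by blast
  interpret B: bsl p q by unfold_locales (use p1 q1 in auto)
  interpret grp: group "BS_group p q" by (rule B.group_G)
  have key: "centraliser (BS_group p q) (B.cls (map (\<lambda>y. (y, True)) ys))
      = generate (BS_group p q) {B.cls (map (\<lambda>y. (y, True)) ys)}"
    if "ys \<noteq> []" "GA \<notin> set ys" "hd ys \<notin> set (tl ys)" for ys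
    using B.main_incl[OF that] grp.generate_sub_centraliser[OF B.cls_in] by blast
  have gen: "gen_elem p q g = B.cls [(g, True)]" for g by (simp add: gen_elem_def B.cls_def)
  have t: "t = B.cls (map (\<lambda>y. (y, True)) [GT])" by (simp add: t_def gen)
  have s: "s = B.cls (map (\<lambda>y. (y, True)) [GS])" by (simp add: s_def gen)
  have st: "s \<otimes>\<^bsub>G\<^esub> t [^]\<^bsub>G\<^esub> i = B.cls (map (\<lambda>y. (y, True)) (GS # replicate i GT))" for i :: nat
    by (simp add: s t G_def B.pow_cls B.mult_cls concat_rep_single map_replicate)
  show ?thesis
    unfolding st
    by (simp add: key t s G_def del: list.map)
qed

end
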